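(* Let $R$ be a $u$-ring, let $n$ be a positive integer and let $I$ be a proper ideal of $R$. Then the following conditions are equivalent: (a) $I$ is a strongly $n$-absorbing ideal of $R$; (b) $I$ is an $n$-absorbing ideal of $R$; (c) for every integer $t$ with $0\leq t\leq n$, all ideals $I_1,\dots,I_t$ of $R$ and all elements $x_1,\dots,x_{n-t}\in R$ such that $x_1\cdots x_{n-t}I_1\cdots I_t\not\subseteq I$, one has $$(I:_R x_1\cdots x_{n-t}I_1\cdots I_t)=\Big[\bigcup_{i=1}^{n-t}(I:_R x_1\cdots\widehat{x_i}\cdots x_{n-t}I_1\cdots I_t)\Big]\cup\Big[\bigcup_{j=1}^{t}(I:_R x_1\cdots x_{n-t}I_1\cdots\widehat{I_j}\cdots I_t)\Big];$$ (d) for every integer $t$ with $0\leq t\leq n$, all ideals $I_1,\dots,I_t$ of $R$ and all elements $x_1,\dots,x_{n-t}\in R$ such that $x_1\cdots x_{n-t}I_1\cdots I_t\not\subseteq I$, either $(I:_R x_1\cdots x_{n-t}I_1\cdots I_t)=(I:_R x_1\cdots\widehat{x_i}\cdots x_{n-t}I_1\cdots I_t)$ for some $1\leq i\leq n-t$, or $(I:_R x_1\cdots x_{n-t}I_1\cdots I_t)=(I:_R x_1\cdots x_{n-t}I_1\cdots\widehat{I_j}\cdots I_t)$ for some $1\leq j\leq t$.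
   Context: All rings are commutative with $1\neq 0$. A ring $R$ is a $u$-ring if whenever an ideal of $R$ is contained in a finite union of ideals of $R$, it is contained in one of those ideals. A proper ideal $I$ of $R$ is $n$-absorbing if whenever $a_1\cdots a_{n+1}\in I$ with $a_1,\dots,a_{n+1}\in R$, there are $n$ of the $a_i$'s whose product is in $I$; it is strongly $n$-absorbing if whenever $I_1\cdots I_{n+1}\subseteq I$ for ideals $I_1,\dots,I_{n+1}$ of $R$, there are $n$ of the $I_i$'s whose product is contained in $I$. For an ideal (or element) $K$, $(I:_R K)=\{r\in R: rK\subseteq I\}$; $x_1\cdots x_{n-t}I_1\cdots I_t$ denotes the ideal product (with the elements regarded as principal ideals); a hat $\widehat{\ }$ denotes omission of that factor; an empty product is $R$. *)

theory Defs
  imports Main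
begin

definition is_ideal :: "'a::comm_ring_1 set \<Rightarrow> bool" where
  "is_ideal J \<longleftrightarrow> 0 \<in> J \<and> (\<forall>a\<in>J. \<forall>b\<in>J. a + b \<in> J) \<and> (\<forall>r. \<forall>a\<in>J. r * a \<in> J)"

definition ideal_gen :: "'a::comm_ring_1 set \<Rightarrow> 'a set" where
  "ideal_gen S = \<Inter>{J. is_ideal J \<and> S \<subseteq> J}"

definition principal :: "'a::comm_ring_1 \<Rightarrow> 'a set" where
  "principal x = ideal_gen {x}"

definition ideal_mult :: "'a::comm_ring_1 set \<Rightarrow> 'a set \<Rightarrow> 'a set" where
  "ideal_mult A B = ideal_gen {a * b | a b. a \<in> A \<and> b \<in> B}"

definition iprod :: "'a::comm_ring_1 set list \<Rightarrow> 'a set" where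
  "iprod Js = foldr ideal_mult Js UNIV"

definition colon :: "'a::comm_ring_1 set \<Rightarrow> 'a set \<Rightarrow> 'a set" where
  "colon I K = {r. \<forall>k\<in>K. r * k \<in> I}"

definition u_ring :: "'a::comm_ring_1 itself \<Rightarrow> bool" where
  "u_ring _ \<longleftrightarrow> (\<forall>(J::'a set) F. is_ideal J \<and> finite F \<and> (\<forall>K\<in>F. is_ideal K) \<and> J \<subseteq> \<Union>F
      \<longrightarrow> (\<exists>K\<in>F. J \<subseteq> K))"

definition n_absorbing :: "nat \<Rightarrow> 'a::comm_ring_1 set \<Rightarrow> bool" where
  "n_absorbing n I \<longleftrightarrow> is_ideal I \<and> I \<noteq> UNIV \<and>
     (\<forall>a :: nat \<Rightarrow> 'a. (\<Prod>i\<in>{..<n+1}. a i) \<in> I \<longrightarrow>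
        (\<exists>j<n+1. (\<Prod>i\<in>{..<n+1} - {j}. a i) \<in> I))"

definition strongly_n_absorbing :: "nat \<Rightarrow> 'a::comm_ring_1 set \<Rightarrow> bool" where
  "strongly_n_absorbing n I \<longleftrightarrow> is_ideal I \<and> I \<noteq> UNIV \<and>
     (\<forall>Is :: nat \<Rightarrow> 'a set. (\<forall>i<n+1. is_ideal (Is i)) \<and> iprod (map Is [0..<n+1]) \<subseteq> I \<longrightarrow>
        (\<exists>j<n+1. iprod (map Is (filter (\<lambda>k. k \<noteq> j) [0..<n+1])) \<subseteq> I))"

(* x_1 ... x_m I_1 ... I_t  (0-indexed: x 0..x (m-1), Is 0..Is (t-1)) *)
definition xI_prod :: "nat \<Rightarrow> nat \<Rightarrow> (nat \<Rightarrow> 'a::comm_ring_1) \<Rightarrow> (nat \<Rightarrow> 'a set) \<Rightarrow> 'a set" where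
  "xI_prod m t x Is = iprod (map (\<lambda>k. principal (x k)) [0..<m] @ map Is [0..<t])"

definition xI_prod_omit_x :: "nat \<Rightarrow> nat \<Rightarrow> (nat \<Rightarrow> 'a::comm_ring_1) \<Rightarrow> (nat \<Rightarrow> 'a set) \<Rightarrow> nat \<Rightarrow> 'a set" where
  "xI_prod_omit_x m t x Is i =
     iprod (map (\<lambda>k. principal (x k)) (filter (\<lambda>k. k \<noteq> i) [0..<m]) @ map Is [0..<t])"

definition xI_prod_omit_I :: "nat \<Rightarrow> nat \<Rightarrow> (nat \<Rightarrow> 'a::comm_ring_1) \<Rightarrow> (nat \<Rightarrow> 'a set) \<Rightarrow> nat \<Rightarrow> 'a set" where
  "xI_prod_omit_I m t x Is j =
     iprod (map (\<lambda>k. principal (x k)) [0..<m] @ map Is (filter (\<lambda>k. k \<noteq> j) [0..<t]))"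

end

theory Submission imports Defs "HOL-Library.Multiset" begin

lemma prod_list_distinct: "distinct xs \<Longrightarrow> prod_list (map f xs) = prod f (set xs)"
  by (induct xs) auto

lemma is_idealD:
  assumes "is_ideal J"
  shows "0 \<in> J" "a \<in> J \<Longrightarrow> b \<in> J \<Longrightarrow> a + b \<in> J" "a \<in> J \<Longrightarrow> r * a \<in> J"
  using assms unfolding is_ideal_def by auto

lemma ideal_one: "is_ideal J \<Longrightarrow> 1 \<in> J \<Longrightarrow> J = UNIV"
  using is_idealD(3)[of J 1] by fastforce

lemma ideal_gen_ideal: "is_ideal (ideal_gen S)"
  unfolding ideal_gen_def is_ideal_def by auto

lemma ideal_gen_sub: "S \<subseteq> ideal_gen S"
  unfolding ideal_gen_def by auto

lemma ideal_gen_least: "is_ideal J \<Longrightarrow> S \<subseteq> J \<Longrightarrow> ideal_gen S \<subseteq> J"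
  unfolding ideal_gen_def by auto

lemma ideal_gen_le_iff: "is_ideal J \<Longrightarrow> ideal_gen S \<subseteq> J \<longleftrightarrow> S \<subseteq> J"
  using ideal_gen_least ideal_gen_sub by blast

lemma principal_ideal: "is_ideal (principal x)"
  unfolding principal_def by (rule ideal_gen_ideal)

lemma colon_ideal: "is_ideal I \<Longrightarrow> is_ideal (colon I K)"
  unfolding is_ideal_def colon_def by (auto simp: distrib_right mult.assoc)

lemma lcolon_ideal: "is_ideal J \<Longrightarrow> is_ideal {a. \<forall>p\<in>P. a * p \<in> J}"
  unfolding is_ideal_def by (auto simp: distrib_right mult.assoc)

lemma u_ringD: "u_ring TYPE('a::comm_ring_1) \<Longrightarrow> is_ideal (J::'a set) \<Longrightarrow> finite F \<Longrightarrow> (\<forall>K\<in>F. is_ideal K)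
   \<Longrightarrow> J \<subseteq> \<Union>F \<Longrightarrow> \<exists>K\<in>F. J \<subseteq> K"
  unfolding u_ring_def by blast

definition setmul :: "'a::comm_ring_1 set \<Rightarrow> 'a set \<Rightarrow> 'a set" where
  "setmul A B = {a * b | a b. a \<in> A \<and> b \<in> B}"

lemma setmul_comm: "setmul A (setmul B C) = setmul B (setmul A C)"
  unfolding setmul_def by (auto simp: mult.left_commute) (metis mult.left_commute)+

interpretation setmul_cfc: comp_fun_commute setmul
  by unfold_locales (auto simp: fun_eq_iff setmul_comm)

definition psm :: "'a::comm_ring_1 set multiset \<Rightarrow> 'a set" where
  "psm M = fold_mset setmul {1} M"

lemma psm_empty[simp]: "psm {#} = {1}"
  unfolding psm_def by simp

lemma psm_add: "psm (add_mset A M) = setmul A (psm M)"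
  unfolding psm_def by simp

lemma psm_add_le: "psm (add_mset A M) \<subseteq> J \<longleftrightarrow> (\<forall>a\<in>A. \<forall>p\<in>psm M. a * p \<in> J)"
  unfolding psm_add setmul_def by auto

lemma psm_add_le': "psm (add_mset A M) \<subseteq> J \<longleftrightarrow> A \<subseteq> {a. \<forall>p\<in>psm M. a * p \<in> J}"
  unfolding psm_add_le by auto

lemma psm_sing_le: "psm (add_mset {r} M) \<subseteq> J \<longleftrightarrow> psm M \<subseteq> {s. r * s \<in> J}"
  unfolding psm_add_le by auto

lemma psm_mono: "is_ideal J \<Longrightarrow> psm N \<subseteq> J \<Longrightarrow> psm (N' + N) \<subseteq> J"
proof (induct N')
  case empty then show ?case by simp
next
  case (add A N')
  have "psm (add_mset A (N' + N)) \<subseteq> J"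
    unfolding psm_add_le using add is_idealD(3) by blast
  then show ?case by simp
qed

lemma psm_singles: "psm (mset (map (\<lambda>k. {x k}) xs)) = {prod_list (map x xs)}"
  by (induct xs) (auto simp: setmul_def psm_add)

lemma iprod_le: "is_ideal J \<Longrightarrow> iprod L \<subseteq> J \<longleftrightarrow> psm (mset L) \<subseteq> J"
proof (induct L arbitrary: J)
  case Nil then show ?case using ideal_one[of J] by (auto simp: iprod_def)
next
  case (Cons A L)
  have "iprod (A # L) \<subseteq> J \<longleftrightarrow> (\<forall>a\<in>A. iprod L \<subseteq> {s. a * s \<in> J})"
    unfolding iprod_def ideal_mult_def using ideal_gen_le_iff[OF Cons.prems] by auto
  also have "\<dots> \<longleftrightarrow> (\<forall>a\<in>A. psm (mset L) \<subseteq> {s. a * s \<in> J})"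
  proof -
    have "is_ideal {s. a * s \<in> J}" for a
      using Cons.prems unfolding is_ideal_def by (auto simp: distrib_left mult.left_commute)
    then show ?thesis using Cons.hyps by blast
  qed
  also have "\<dots> \<longleftrightarrow> psm (mset (A # L)) \<subseteq> J" by (auto simp: psm_add_le)
  finally show ?case .
qed

lemma colon_iff: "r \<in> colon I K \<longleftrightarrow> K \<subseteq> {s. r * s \<in> I}"
  unfolding colon_def by auto

lemma colon_iprod: "is_ideal I \<Longrightarrow> r \<in> colon I (iprod L) \<longleftrightarrow> psm (add_mset {r} (mset L)) \<subseteq> I"
proof -
  assume I: "is_ideal I"
  have "is_ideal {s. r * s \<in> I}"
    using I unfolding is_ideal_def by (auto simp: distrib_left mult.left_commute)
  then show ?thesis unfolding colon_iff psm_sing_le by (rule iprod_le)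
qed

lemma psm_principal: "is_ideal J \<Longrightarrow> psm (add_mset (principal x) M) \<subseteq> J \<longleftrightarrow> psm (add_mset {x} M) \<subseteq> J"
  unfolding psm_add_le' principal_def
  using ideal_gen_le_iff[OF lcolon_ideal[of J "psm M"], of "{x}"] by simp

lemma psm_principals: "is_ideal J \<Longrightarrow>
  psm (mset (map (\<lambda>k. principal (x k)) xs) + N) \<subseteq> J \<longleftrightarrow> psm (mset (map (\<lambda>k. {x k}) xs) + N) \<subseteq> J"
proof (induct xs arbitrary: N)
  case Nil then show ?case by simp
next
  case (Cons a xs)
  have "psm (mset (map (\<lambda>k. principal (x k)) (a # xs)) + N) \<subseteq> J
     \<longleftrightarrow> psm (add_mset {x a} (mset (map (\<lambda>k. principal (x k)) xs) + N)) \<subseteq> J"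
    using psm_principal[OF Cons.prems] by simp
  also have "\<dots> \<longleftrightarrow> psm (mset (map (\<lambda>k. principal (x k)) xs) + add_mset {x a} N) \<subseteq> J" by simp
  also have "\<dots> \<longleftrightarrow> psm (mset (map (\<lambda>k. {x k}) xs) + add_mset {x a} N) \<subseteq> J"
    using Cons by blast
  also have "\<dots> \<longleftrightarrow> psm (mset (map (\<lambda>k. {x k}) (a # xs)) + N) \<subseteq> J" by simp
  finally show ?case .
qed

lemma mset_filter_neq: "distinct xs \<Longrightarrow> i \<in> set xs \<Longrightarrow>
   mset (map f (filter (\<lambda>k. k \<noteq> i) xs)) = mset (map f xs) - {#f i#}"
proof (induct xs)
  case Nil then show ?case by simp
next
  case (Cons a xs)
  show ?case
  proof (cases "a = i")
    case True
    then have "filter (\<lambda>k. k \<noteq> i) xs = xs" using Cons.prems by (auto simp: filter_id_conv)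
    then show ?thesis using True by simp
  next
    case False
    then show ?thesis using Cons by (auto simp: add_mset_diff_bothsides[symmetric] diff_union_swap)
  qed
qed


lemma KL:
  fixes I :: "'a::comm_ring_1 set"
  assumes U: "u_ring TYPE('a)" and NA: "n_absorbing n I"
  shows "size M = n+1 \<Longrightarrow> \<forall>A\<in>#M. is_ideal A \<or> (\<exists>x. A={x}) \<Longrightarrow> psm M \<subseteq> I
     \<Longrightarrow> \<exists>A\<in>#M. psm (M - {#A#}) \<subseteq> I"
proof (induction "size (filter_mset (\<lambda>A. \<not>(\<exists>x. A={x})) M)" arbitrary: M rule: less_induct)
  case less
  have I: "is_ideal I" using NA unfolding n_absorbing_def by blast
  show ?case
  proof (cases "\<exists>A\<in>#M. \<not>(\<exists>x. A={x})")
    case False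
    obtain L where L: "mset L = M" using ex_mset by blast
    define a where "a i = the_elem (L!i)" for i
    have len: "length L = n+1" using less.prems L by auto
    have Leq: "L = map (\<lambda>i. {a i}) [0..<n+1]"
    proof (rule nth_equalityI)
      show "length L = length (map (\<lambda>i. {a i}) [0..<n+1])" by (simp add: len)
      fix i assume i: "i < length L"
      then have "L!i \<in># M" using L by (metis nth_mem set_mset_mset)
      with False obtain y where "L!i = {y}" by blast
      then show "L!i = map (\<lambda>i. {a i}) [0..<n+1] ! i" using i len by (simp add: a_def del: upt_Suc)
    qed
    have "psm M = {\<Prod>i\<in>{..<n+1}. a i}"
      using L Leq psm_singles[of a "[0..<n+1]"] prod_list_distinct[of "[0..<n+1]" a]
      by (simp add: atLeast0LessThan)
    then have "(\<Prod>i\<in>{..<n+1}. a i) \<in> I" using less.prems(3) by simp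
    then obtain j where j: "j<n+1" "(\<Prod>i\<in>{..<n+1}-{j}. a i) \<in> I"
      using NA unfolding n_absorbing_def by blast
    have "mset (map (\<lambda>i. {a i}) (filter (\<lambda>k. k\<noteq>j) [0..<n+1])) = mset (map (\<lambda>i. {a i}) [0..<n+1]) - {#{a j}#}"
      by (rule mset_filter_neq) (use j in auto)
    then have "M - {#{a j}#} = mset (map (\<lambda>i. {a i}) (filter (\<lambda>k. k\<noteq>j) [0..<n+1]))"
      by (metis L Leq)
    moreover have "set (filter (\<lambda>k. k\<noteq>j) [0..<n+1]) = {..<n+1}-{j}" by auto
    ultimately have "psm (M - {#{a j}#}) = {\<Prod>i\<in>{..<n+1}-{j}. a i}"
      using psm_singles[of a "filter (\<lambda>k. k\<noteq>j) [0..<n+1]"]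
        prod_list_distinct[of "filter (\<lambda>k. k\<noteq>j) [0..<n+1]" a] by simp
    moreover have "{a j} \<in># M" using L Leq j by (auto simp del: upt_Suc)
    ultimately show ?thesis using j by (metis empty_subsetI insert_subset)
  next
    case True
    then obtain A where AM: "A \<in># M" and ns: "\<not>(\<exists>x. A={x})" by blast
    then have Aid: "is_ideal A" using less.prems(2) by blast
    define M' where "M' = M - {#A#}"
    have Meq: "M = add_mset A M'" using AM M'_def by simp
    show ?thesis
    proof (cases "psm M' \<subseteq> I")
      case True then show ?thesis using AM M'_def by blast
    next
      case notM': False
      define K where "K B = {a. \<forall>p\<in>psm (M' - {#B#}). a * p \<in> I}" for B
      have "A \<subseteq> \<Union>(K ` set_mset M')"
      proof
        fix a assume aA: "a \<in> A"
        define Ma where "Ma = add_mset {a} M'"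
        have "size (filter_mset (\<lambda>A. \<not>(\<exists>x. A={x})) Ma) < size (filter_mset (\<lambda>A. \<not>(\<exists>x. A={x})) M)"
          using Meq ns by (simp add: Ma_def)
        moreover have "size Ma = n+1" using less.prems(1) Meq Ma_def by simp
        moreover have "\<forall>A\<in>#Ma. is_ideal A \<or> (\<exists>x. A={x})" using less.prems(2) Meq Ma_def by auto
        moreover have "psm Ma \<subseteq> I" using less.prems(3) aA unfolding Meq Ma_def psm_add_le by blast
        ultimately obtain B where B: "B \<in># Ma" "psm (Ma - {#B#}) \<subseteq> I" using less.hyps by blast
        have "B \<noteq> {a}" using B notM' Ma_def by auto
        then have "B \<in># M'" "Ma - {#B#} = add_mset {a} (M' - {#B#})" using B(1) Ma_def by auto
        then show "a \<in> \<Union>(K ` set_mset M')" using B(2) unfolding K_def by (auto simp: psm_add_le)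
      qed
      moreover have "\<forall>B\<in>K ` set_mset M'. is_ideal B" using lcolon_ideal[OF I] by (auto simp: K_def)
      ultimately obtain B where B: "B \<in># M'" "A \<subseteq> K B"
        using u_ringD[OF U Aid, of "K ` set_mset M'"] by auto
      then have "psm (add_mset A (M' - {#B#})) \<subseteq> I" unfolding psm_add_le' K_def by simp
      moreover have "add_mset A (M' - {#B#}) = M - {#B#}" using Meq B(1) by simp
      moreover have "B \<in># M" using Meq B by simp
      ultimately show ?thesis by auto
    qed
  qed
qed


lemma sub_gen: "is_ideal J \<Longrightarrow> iprod (map (\<lambda>k. principal (x k)) xs @ ys) \<subseteq> J
   \<longleftrightarrow> psm (mset (map (\<lambda>k. {x k}) xs) + mset ys) \<subseteq> J"
  by (simp only: iprod_le mset_append psm_principals)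

lemma col_gen: "is_ideal I \<Longrightarrow> r \<in> colon I (iprod (map (\<lambda>k. principal (x k)) xs @ ys))
   \<longleftrightarrow> psm (add_mset {r} (mset (map (\<lambda>k. {x k}) xs) + mset ys)) \<subseteq> I"
proof -
  assume I: "is_ideal I"
  have "r \<in> colon I (iprod (map (\<lambda>k. principal (x k)) xs @ ys))
     \<longleftrightarrow> psm (mset (map (\<lambda>k. principal (x k)) xs) + add_mset {r} (mset ys)) \<subseteq> I"
    using colon_iprod[OF I] by simp
  also have "\<dots> \<longleftrightarrow> psm (mset (map (\<lambda>k. {x k}) xs) + add_mset {r} (mset ys)) \<subseteq> I"
    by (rule psm_principals[OF I])
  finally show ?thesis by simp
qed

lemma iprod_principals: "is_ideal J \<Longrightarrow> iprod (map (\<lambda>k. principal (a k)) xs) \<subseteq> J \<longleftrightarrow> prod_list (map a xs) \<in> J"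
  using sub_gen[of J a xs "[]"] psm_singles[of a xs] by simp


theorem mainTheorem1:
  fixes I :: "'a::comm_ring_1 set" and n :: nat
  assumes "u_ring TYPE('a)" and "n > 0" and "is_ideal I" and "I \<noteq> UNIV"
  shows "(strongly_n_absorbing n I \<longleftrightarrow> n_absorbing n I)
    \<and> (n_absorbing n I \<longleftrightarrow>
        (\<forall>t\<le>n. \<forall>(Is :: nat \<Rightarrow> 'a set) (x :: nat \<Rightarrow> 'a).
           (\<forall>j<t. is_ideal (Is j)) \<and> \<not> xI_prod (n - t) t x Is \<subseteq> I \<longrightarrow>
           colon I (xI_prod (n - t) t x Is) =
             (\<Union>i<n - t. colon I (xI_prod_omit_x (n - t) t x Is i))
             \<union> (\<Union>j<t. colon I (xI_prod_omit_I (n - t) t x Is j))))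
    \<and> (n_absorbing n I \<longleftrightarrow>
        (\<forall>t\<le>n. \<forall>(Is :: nat \<Rightarrow> 'a set) (x :: nat \<Rightarrow> 'a).
           (\<forall>j<t. is_ideal (Is j)) \<and> \<not> xI_prod (n - t) t x Is \<subseteq> I \<longrightarrow>
           (\<exists>i<n - t. colon I (xI_prod (n - t) t x Is) = colon I (xI_prod_omit_x (n - t) t x Is i))
           \<or> (\<exists>j<t. colon I (xI_prod (n - t) t x Is) = colon I (xI_prod_omit_I (n - t) t x Is j))))"
  (is "(?A \<longleftrightarrow> ?B) \<and> (?B \<longleftrightarrow> ?C) \<and> (?B \<longleftrightarrow> ?D)")
proof -
  note U = assms(1) and I = assms(3) and IU = assms(4)
  have setf: "set (filter (\<lambda>k. k\<noteq>j) [0..<m]) = {..<m}-{j}" for j m by auto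
  have ab: "?A \<Longrightarrow> ?B"
  proof -
    assume A: ?A
    show ?B unfolding n_absorbing_def
    proof (intro conjI I IU allI impI)
      fix a :: "nat \<Rightarrow> 'a" assume pa: "(\<Prod>i\<in>{..<n+1}. a i) \<in> I"
      define Is where "Is = (\<lambda>i. principal (a i))"
      have "iprod (map Is [0..<n+1]) \<subseteq> I"
        using iprod_principals[OF I, of a "[0..<n+1]"] pa prod_list_distinct[of "[0..<n+1]" a]
        by (simp add: Is_def atLeast0LessThan del: upt_Suc)
      moreover have "\<forall>i<n+1. is_ideal (Is i)" by (simp add: Is_def principal_ideal)
      ultimately obtain j where j: "j<n+1" "iprod (map Is (filter (\<lambda>k. k \<noteq> j) [0..<n+1])) \<subseteq> I"
        using A unfolding strongly_n_absorbing_def by blast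
      then have "prod_list (map a (filter (\<lambda>k. k \<noteq> j) [0..<n+1])) \<in> I"
        using iprod_principals[OF I, of a] by (simp add: Is_def del: upt_Suc)
      then show "\<exists>j<n+1. (\<Prod>i\<in>{..<n+1} - {j}. a i) \<in> I"
        using j(1) prod_list_distinct[of "filter (\<lambda>k. k \<noteq> j) [0..<n+1]" a] setf[of j "n+1"]
        by (metis distinct_filter distinct_upt)
    qed
  qed
  have ba: "?B \<Longrightarrow> ?A"
  proof -
    assume B: ?B
    show ?A unfolding strongly_n_absorbing_def
    proof (intro conjI I IU allI impI)
      fix Is :: "nat \<Rightarrow> 'a set"
      assume h: "(\<forall>i<n + 1. is_ideal (Is i)) \<and> iprod (map Is [0..<n + 1]) \<subseteq> I"
      define M where "M = mset (map Is [0..<n+1])"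
      have "size M = n+1" by (simp add: M_def)
      moreover have "\<forall>A\<in>#M. is_ideal A \<or> (\<exists>x. A={x})" using h by (auto simp: M_def simp del: upt_Suc)
      moreover have "psm M \<subseteq> I" using h iprod_le[OF I] by (simp add: M_def del: upt_Suc)
      ultimately obtain A where A: "A \<in># M" "psm (M - {#A#}) \<subseteq> I"
        using KL[OF U B] by blast
      then obtain j where j: "j < n+1" "A = Is j" by (auto simp: M_def simp del: upt_Suc)
      have "mset (map Is (filter (\<lambda>k. k\<noteq>j) [0..<n+1])) = M - {#A#}"
        unfolding M_def j(2) by (rule mset_filter_neq) (use j in auto)
      then show "\<exists>j<n+1. iprod (map Is (filter (\<lambda>k. k \<noteq> j) [0..<n + 1])) \<subseteq> I"
        using A(2) j(1) iprod_le[OF I] by metis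
    qed
  qed
  have bc: "?B \<Longrightarrow> ?C"
  proof (intro allI impI)
    assume B: ?B
    fix t Is and x :: "nat \<Rightarrow> 'a"
    assume t: "t \<le> n" and h: "(\<forall>j<t. is_ideal (Is j)) \<and> \<not> xI_prod (n - t) t x Is \<subseteq> I"
    define m where "m = n - t"
    define X where "X = mset (map (\<lambda>k. {x k}) [0..<m])"
    define Y where "Y = mset (map Is [0..<t])"
    have cP: "r \<in> colon I (xI_prod m t x Is) \<longleftrightarrow> psm (add_mset {r} (X + Y)) \<subseteq> I" for r
      unfolding xI_prod_def X_def Y_def by (rule col_gen[OF I])
    have nP: "\<not> psm (X + Y) \<subseteq> I"
      using h sub_gen[OF I] unfolding xI_prod_def X_def Y_def m_def by metis
    have cX: "r \<in> colon I (xI_prod_omit_x m t x Is i) \<longleftrightarrow> psm (add_mset {r} ((X - {#{x i}#}) + Y)) \<subseteq> I"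
      if i: "i < m" for r i
    proof -
      have "mset (map (\<lambda>k. {x k}) (filter (\<lambda>k. k\<noteq>i) [0..<m])) = X - {#{x i}#}"
        unfolding X_def by (rule mset_filter_neq) (use i in auto)
      then show ?thesis unfolding xI_prod_omit_x_def col_gen[OF I] Y_def by simp
    qed
    have cI: "r \<in> colon I (xI_prod_omit_I m t x Is j) \<longleftrightarrow> psm (add_mset {r} (X + (Y - {#Is j#}))) \<subseteq> I"
      if j: "j < t" for r j
    proof -
      have "mset (map Is (filter (\<lambda>k. k\<noteq>j) [0..<t])) = Y - {#Is j#}"
        unfolding Y_def by (rule mset_filter_neq) (use j in auto)
      then show ?thesis unfolding xI_prod_omit_I_def col_gen[OF I] X_def by simp
    qed
    show "colon I (xI_prod (n - t) t x Is) =
             (\<Union>i<n - t. colon I (xI_prod_omit_x (n - t) t x Is i))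
             \<union> (\<Union>j<t. colon I (xI_prod_omit_I (n - t) t x Is j))"
      unfolding m_def[symmetric]
    proof (rule equalityI; rule subsetI)
      fix r assume "r \<in> colon I (xI_prod m t x Is)"
      then have r: "psm (add_mset {r} (X + Y)) \<subseteq> I" using cP by blast
      have "size (add_mset {r} (X + Y)) = n+1" using t by (simp add: X_def Y_def m_def)
      moreover have "\<forall>A\<in>#add_mset {r} (X + Y). is_ideal A \<or> (\<exists>x. A={x})"
        using h by (auto simp: X_def Y_def)
      ultimately obtain A where A: "A \<in># add_mset {r} (X + Y)" "psm (add_mset {r} (X + Y) - {#A#}) \<subseteq> I"
        using KL[OF U B] r by blast
      show "r \<in> (\<Union>i<m. colon I (xI_prod_omit_x m t x Is i)) \<union> (\<Union>j<t. colon I (xI_prod_omit_I m t x Is j))"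
      proof (cases "A = {r}")
        case True then show ?thesis using A nP by simp
      next
        case False
        then have AXY: "A \<in># X + Y" and eq: "add_mset {r} (X + Y) - {#A#} = add_mset {r} (X + Y - {#A#})"
          using A(1) by auto
        show ?thesis
        proof (cases "A \<in># X")
          case True
          then obtain i where i: "i < m" "A = {x i}" by (auto simp: X_def)
          have "X + Y - {#A#} = (X - {#A#}) + Y" using True by (simp add: diff_union_swap2)
          then have "r \<in> colon I (xI_prod_omit_x m t x Is i)" using cX[OF i(1)] A(2) eq i(2) by simp
          then show ?thesis using i by blast
        next
          case False
          then have "A \<in># Y" using AXY by simp
          then obtain j where j: "j < t" "A = Is j" by (auto simp: Y_def)
          have "X + Y - {#A#} = X + (Y - {#A#})" using \<open>A \<in># Y\<close> by simp
          then have "r \<in> colon I (xI_prod_omit_I m t x Is j)" using cI[OF j(1)] A(2) eq j(2) by simp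
          then show ?thesis using j by blast
        qed
      qed
    next
      fix r assume "r \<in> (\<Union>i<m. colon I (xI_prod_omit_x m t x Is i)) \<union> (\<Union>j<t. colon I (xI_prod_omit_I m t x Is j))"
      then show "r \<in> colon I (xI_prod m t x Is)"
      proof (elim UnE UN_E)
        fix i assume i: "i \<in> {..<m}" and "r \<in> colon I (xI_prod_omit_x m t x Is i)"
        then have "psm (add_mset {r} ((X - {#{x i}#}) + Y)) \<subseteq> I" using cX by auto
        then have "psm ({#{x i}#} + add_mset {r} ((X - {#{x i}#}) + Y)) \<subseteq> I" by (rule psm_mono[OF I])
        moreover have "{#{x i}#} + add_mset {r} ((X - {#{x i}#}) + Y) = add_mset {r} (X + Y)"
          using i by (simp add: X_def)
        ultimately show ?thesis using cP by metis
      next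
        fix j assume j: "j \<in> {..<t}" and "r \<in> colon I (xI_prod_omit_I m t x Is j)"
        then have "psm (add_mset {r} (X + (Y - {#Is j#}))) \<subseteq> I" using cI by auto
        then have "psm ({#Is j#} + add_mset {r} (X + (Y - {#Is j#}))) \<subseteq> I" by (rule psm_mono[OF I])
        moreover have "{#Is j#} + add_mset {r} (X + (Y - {#Is j#})) = add_mset {r} (X + Y)"
          using j by (simp add: Y_def)
        ultimately show ?thesis using cP by metis
      qed
    qed
  qed
  have cd: "?C \<Longrightarrow> ?D"
  proof (intro allI impI)
    assume C: ?C
    fix t Is and x :: "nat \<Rightarrow> 'a"
    assume t: "t \<le> n" and h: "(\<forall>j<t. is_ideal (Is j)) \<and> \<not> xI_prod (n - t) t x Is \<subseteq> I"
    let ?F = "(\<lambda>i. colon I (xI_prod_omit_x (n - t) t x Is i)) ` {..<n-t} \<union> (\<lambda>j. colon I (xI_prod_omit_I (n - t) t x Is j)) ` {..<t}"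
    have eq: "colon I (xI_prod (n - t) t x Is) = \<Union>?F" using C t h by auto
    have fin: "finite ?F" by simp
    have idF: "\<forall>K\<in>?F. is_ideal K" using colon_ideal[OF I] by blast
    have sub: "colon I (xI_prod (n - t) t x Is) \<subseteq> \<Union>?F" using eq by (rule equalityD1)
    obtain K where K: "K \<in> ?F" "colon I (xI_prod (n - t) t x Is) \<subseteq> K"
      using u_ringD[OF U colon_ideal[OF I] fin idF sub] by blast
    then have "colon I (xI_prod (n - t) t x Is) = K" using eq by blast
    then show "(\<exists>i<n - t. colon I (xI_prod (n - t) t x Is) = colon I (xI_prod_omit_x (n - t) t x Is i))
           \<or> (\<exists>j<t. colon I (xI_prod (n - t) t x Is) = colon I (xI_prod_omit_I (n - t) t x Is j))"
      using K(1) by blast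
  qed
  have db: "?D \<Longrightarrow> ?B"
  proof -
    assume D: ?D
    show ?B unfolding n_absorbing_def
    proof (intro conjI I IU allI impI)
      fix a :: "nat \<Rightarrow> 'a" assume pa: "(\<Prod>i\<in>{..<n+1}. a i) \<in> I"
      define Is :: "nat \<Rightarrow> 'a set" where "Is i = UNIV" for i
      have xp: "xI_prod n 0 a Is = iprod (map (\<lambda>k. principal (a k)) [0..<n])"
        by (simp add: xI_prod_def)
      have pl: "prod_list (map a [0..<n]) = (\<Prod>i\<in>{..<n}. a i)"
        using prod_list_distinct[of "[0..<n]" a] by (simp add: atLeast0LessThan)
      show "\<exists>j<n+1. (\<Prod>i\<in>{..<n+1} - {j}. a i) \<in> I"
      proof (cases "xI_prod n 0 a Is \<subseteq> I")
        case True
        then have "(\<Prod>i\<in>{..<n}. a i) \<in> I" using xp iprod_principals[OF I, of a "[0..<n]"] pl by simp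
        moreover have "{..<n+1} - {n} = {..<n}" by auto
        ultimately show ?thesis by (metis less_add_one)
      next
        case False
        then obtain i where i: "i < n" "colon I (xI_prod n 0 a Is) = colon I (xI_prod_omit_x n 0 a Is i)"
          using D[rule_format, of 0 Is a] by auto
        have "a n \<in> colon I (xI_prod n 0 a Is)"
          unfolding xI_prod_def col_gen[OF I]
          using pa psm_singles[of a "n # [0..<n]"] prod_list_distinct[of "n # [0..<n]" a]
          by (simp add: atLeast0LessThan lessThan_Suc)
        then have "a n \<in> colon I (xI_prod_omit_x n 0 a Is i)" using i by simp
        then have "a n * prod_list (map a (filter (\<lambda>k. k\<noteq>i) [0..<n])) \<in> I"
          unfolding xI_prod_omit_x_def col_gen[OF I]
          using psm_singles[of a "n # filter (\<lambda>k. k\<noteq>i) [0..<n]"] by simp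
        moreover have "prod_list (map a (filter (\<lambda>k. k\<noteq>i) [0..<n])) = (\<Prod>k\<in>{..<n}-{i}. a k)"
          using prod_list_distinct[of "filter (\<lambda>k. k\<noteq>i) [0..<n]" a] setf[of i n] by simp
        moreover have "{..<n+1} - {i} = insert n ({..<n}-{i})" using i by auto
        ultimately have "(\<Prod>k\<in>{..<n+1}-{i}. a k) \<in> I" by simp
        moreover have "i < n+1" using i by simp
        ultimately show ?thesis by blast
      qed
    qed
  qed
  show ?thesis using ab ba bc cd db by blast
qed

end
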